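(* Let $\mathcal{G}=(G,\odot,\leq)$ be a real continuous Alo-group with $G$ an open interval of $\mathbb{R}$ and identity $e$. The function $d_{[\mathcal{G}]}:[G]\times[G]\to G$, $$d_{[\mathcal{G}]}(\tilde a,\tilde b)=\max\{\|a^-\div b^-\|_{\mathcal{G}},\ \|a^+\div b^+\|_{\mathcal{G}}\}$$ (the $[\mathcal{G}]$-norm of the pair $[a^-\div b^-,a^+\div b^+]$), is a $[\mathcal{G}]$-distance, i.e. for all $\tilde a,\tilde b,\tilde c\in[G]$: (1) $d_{[\mathcal{G}]}(\tilde a,\tilde b)\geq e$; (2) $d_{[\mathcal{G}]}(\tilde a,\tilde b)=e\iff\tilde a=\tilde b$; (3) $d_{[\mathcal{G}]}(\tilde a,\tilde b)=d_{[\mathcal{G}]}(\tilde b,\tilde a)$; (4) $d_{[\mathcal{G}]}(\tilde a,\tilde b)\leq d_{[\mathcal{G}]}(\tilde a,\tilde c)\odot d_{[\mathcal{G}]}(\tilde c,\tilde b)$.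
   Context: An Alo-group $(G,\odot,\leq)$ is an Abelian group with a weak order $\leq$ such that $a\leq b\Rightarrow a\odot c\leq b\odot c$; real means $G\subseteq\mathbb{R}$ with the usual order, continuous means $\odot$ is continuous. $a^{(-1)}$ is the inverse of $a$, $a\div b=a\odot b^{(-1)}$, and $\|a\|_{\mathcal{G}}=\max\{a,a^{(-1)}\}$. $[G]=\{[a^-,a^+]: a^-,a^+\in G,\ a^-\leq a^+\}$, with $\tilde a=[a^-,a^+]$ etc.; two intervals are equal iff both endpoints coincide. *)

theory Defs
  imports "HOL-Analysis.Analysis"
begin

definition real_alo_group ::
  "real set \<Rightarrow> (real \<Rightarrow> real \<Rightarrow> real) \<Rightarrow> real \<Rightarrow> (real \<Rightarrow> real) \<Rightarrow> bool" where
  "real_alo_group G op e iv \<longleftrightarrow>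
     (\<forall>a\<in>G. \<forall>b\<in>G. op a b \<in> G) \<and>
     (\<forall>a\<in>G. \<forall>b\<in>G. \<forall>c\<in>G. op (op a b) c = op a (op b c)) \<and>
     (\<forall>a\<in>G. \<forall>b\<in>G. op a b = op b a) \<and>
     e \<in> G \<and> (\<forall>a\<in>G. op a e = a) \<and>
     (\<forall>a\<in>G. iv a \<in> G \<and> op a (iv a) = e) \<and>
     (\<forall>a\<in>G. \<forall>b\<in>G. \<forall>c\<in>G. a \<le> b \<longrightarrow> op a c \<le> op b c)"

definition continuous_op :: "real set \<Rightarrow> (real \<Rightarrow> real \<Rightarrow> real) \<Rightarrow> bool" where
  "continuous_op G op \<longleftrightarrow> continuous_on (G \<times> G) (\<lambda>(x, y). op x y)"

definition gdiv :: "(real \<Rightarrow> real \<Rightarrow> real) \<Rightarrow> (real \<Rightarrow> real) \<Rightarrow> real \<Rightarrow> real \<Rightarrow> real" where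
  "gdiv op iv a b = op a (iv b)"

definition gnorm :: "(real \<Rightarrow> real) \<Rightarrow> real \<Rightarrow> real" where
  "gnorm iv a = max a (iv a)"

text \<open>Intervals [a^-, a^+] of [G] are represented as pairs (a^-, a^+) with a^- \<le> a^+.\<close>
definition intervals :: "real set \<Rightarrow> (real \<times> real) set" where
  "intervals G = {(am, ap). am \<in> G \<and> ap \<in> G \<and> am \<le> ap}"

definition dist_I ::
  "(real \<Rightarrow> real \<Rightarrow> real) \<Rightarrow> (real \<Rightarrow> real) \<Rightarrow> real \<times> real \<Rightarrow> real \<times> real \<Rightarrow> real" where
  "dist_I op iv A B =
     max (gnorm iv (gdiv op iv (fst A) (fst B))) (gnorm iv (gdiv op iv (snd A) (snd B)))"

end

theory Submission
  imports Defs
begin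

locale ralo =
  fixes G op e iv
  assumes A: "real_alo_group G op e iv"
begin

lemma cl: "a\<in>G \<Longrightarrow> b\<in>G \<Longrightarrow> op a b \<in> G" using A unfolding real_alo_group_def by blast
lemma as: "a\<in>G \<Longrightarrow> b\<in>G \<Longrightarrow> c\<in>G \<Longrightarrow> op (op a b) c = op a (op b c)" using A unfolding real_alo_group_def by blast
lemma cm: "a\<in>G \<Longrightarrow> b\<in>G \<Longrightarrow> op a b = op b a" using A unfolding real_alo_group_def by blast
lemma eG: "e \<in> G" using A unfolding real_alo_group_def by blast
lemma re: "a\<in>G \<Longrightarrow> op a e = a" using A unfolding real_alo_group_def by blast
lemma le: "a\<in>G \<Longrightarrow> op e a = a" using re[of a] cm[of e a] eG by simp
lemma ivG: "a\<in>G \<Longrightarrow> iv a \<in> G" using A unfolding real_alo_group_def by blast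
lemma ri: "a\<in>G \<Longrightarrow> op a (iv a) = e" using A unfolding real_alo_group_def by blast
lemma mo: "a\<in>G \<Longrightarrow> b\<in>G \<Longrightarrow> c\<in>G \<Longrightarrow> a \<le> b \<Longrightarrow> op a c \<le> op b c" using A unfolding real_alo_group_def by blast
lemma mo2: "a\<in>G \<Longrightarrow> b\<in>G \<Longrightarrow> c\<in>G \<Longrightarrow> d\<in>G \<Longrightarrow> a \<le> b \<Longrightarrow> c \<le> d \<Longrightarrow> op a c \<le> op b d"
proof -
  assume h: "a\<in>G" "b\<in>G" "c\<in>G" "d\<in>G" "a \<le> b" "c \<le> d"
  have "op a c \<le> op b c" using mo h by blast
  also have "op b c = op c b" using cm h by blast
  also have "\<dots> \<le> op d b" using mo h by blast
  also have "\<dots> = op b d" using cm h by blast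
  finally show ?thesis .
qed
lemma canc: "a\<in>G \<Longrightarrow> b\<in>G \<Longrightarrow> c\<in>G \<Longrightarrow> op a c = op b c \<Longrightarrow> a = b"
proof -
  assume h: "a\<in>G" "b\<in>G" "c\<in>G" "op a c = op b c"
  have "a = op (op a c) (iv c)" using h as[of a c "iv c"] ivG[of c] ri[of c] re[of a] by simp
  also have "\<dots> = op (op b c) (iv c)" using h by simp
  also have "\<dots> = b" using h as[of b c "iv c"] ivG[of c] ri[of c] re[of b] by simp
  finally show ?thesis .
qed
lemma ivu: "a\<in>G \<Longrightarrow> b\<in>G \<Longrightarrow> op a b = e \<Longrightarrow> iv a = b"
  using canc[of "iv a" b a] ivG[of a] ri[of a] cm[of "iv a" a] cm[of b a] by simp
lemma ivop: "a\<in>G \<Longrightarrow> b\<in>G \<Longrightarrow> iv (op a b) = op (iv a) (iv b)"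
proof -
  assume h: "a\<in>G" "b\<in>G"
  have "op (op a b) (op (iv a) (iv b)) = op (op a (iv a)) (op b (iv b))"
    using h as[of a b "op (iv a) (iv b)"] as[of b "iv a" "iv b"] cm[of b "iv a"] as[of "iv a" b "iv b"] as[of a "iv a" "op b (iv b)"] cl ivG by simp
  also have "\<dots> = e" using h ri le eG by simp
  finally show ?thesis using ivu h cl ivG by blast
qed
lemma iviv: "a\<in>G \<Longrightarrow> iv (iv a) = a" using ivu[of "iv a" a] ivG[of a] ri[of a] cm[of "iv a" a] by simp

lemma gdG: "a\<in>G \<Longrightarrow> b\<in>G \<Longrightarrow> gdiv op iv a b \<in> G" unfolding gdiv_def using cl ivG by blast
lemma gnG: "a\<in>G \<Longrightarrow> gnorm iv a \<in> G" unfolding gnorm_def max_def using ivG by simp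

lemma gn_ge: "a\<in>G \<Longrightarrow> e \<le> gnorm iv a"
proof (cases "e \<le> a")
  case False
  assume a: "a\<in>G"
  have "op a (iv a) \<le> op e (iv a)" using False a mo eG ivG by simp
  then show ?thesis using a ri le ivG unfolding gnorm_def by simp
qed (simp add: gnorm_def)

lemma gn_e: "a\<in>G \<Longrightarrow> gnorm iv a = e \<longleftrightarrow> a = e"
proof
  assume a: "a\<in>G" and g: "gnorm iv a = e"
  have x: "a \<le> e" "iv a \<le> e" using g unfolding gnorm_def by auto
  have "op a (iv a) \<le> op e (iv a)" using x a mo eG ivG by simp
  then have "e \<le> iv a" using a ri le ivG by simp
  then have "iv a = e" using x by simp
  then show "a = e" using ri[of a] a re[of a] by simp
next
  assume a: "a\<in>G" "a = e"
  have "iv e = e" using ivu eG re by blast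
  then show "gnorm iv a = e" using a unfolding gnorm_def by simp
qed

lemma gd_sym: "a\<in>G \<Longrightarrow> b\<in>G \<Longrightarrow> iv (gdiv op iv a b) = gdiv op iv b a"
  unfolding gdiv_def using ivop ivG iviv cm by simp

lemma gn_sym: "a\<in>G \<Longrightarrow> b\<in>G \<Longrightarrow> gnorm iv (gdiv op iv a b) = gnorm iv (gdiv op iv b a)"
  using gd_sym[of a b] gdG[of a b] iviv[of "gdiv op iv a b"] unfolding gnorm_def by (simp add: max.commute)

lemma gd_e: "a\<in>G \<Longrightarrow> b\<in>G \<Longrightarrow> gdiv op iv a b = e \<longleftrightarrow> a = b"
proof
  assume h: "a\<in>G" "b\<in>G" "gdiv op iv a b = e"
  then have "iv a = iv b" using ivu[of a "iv b"] ivG[of b] unfolding gdiv_def by simp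
  then show "a = b" using iviv h by metis
qed (simp add: gdiv_def ri)

lemma gd_comp: "a\<in>G \<Longrightarrow> b\<in>G \<Longrightarrow> c\<in>G \<Longrightarrow> gdiv op iv a b = op (gdiv op iv a c) (gdiv op iv c b)"
proof -
  assume h: "a\<in>G" "b\<in>G" "c\<in>G"
  have "op (op a (iv c)) (op c (iv b)) = op a (op (op (iv c) c) (iv b))"
    using h as[of a "iv c" "op c (iv b)"] as[of "iv c" c "iv b"] cl ivG by simp
  also have "op (iv c) c = e" using h ri[of c] cm[of "iv c" c] ivG[of c] by simp
  finally show ?thesis unfolding gdiv_def using h le ivG by simp
qed

lemma gn_tri: "x\<in>G \<Longrightarrow> y\<in>G \<Longrightarrow> gnorm iv (op x y) \<le> op (gnorm iv x) (gnorm iv y)"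
proof -
  assume h: "x\<in>G" "y\<in>G"
  have "op x y \<le> op (gnorm iv x) (gnorm iv y)"
    using mo2 h gnG by (simp add: gnorm_def)
  moreover have "iv (op x y) \<le> op (gnorm iv x) (gnorm iv y)"
    using mo2 h gnG ivG ivop by (simp add: gnorm_def)
  ultimately show ?thesis unfolding gnorm_def by simp
qed

lemma gn_tri2: "a\<in>G \<Longrightarrow> b\<in>G \<Longrightarrow> c\<in>G \<Longrightarrow>
  gnorm iv (gdiv op iv a b) \<le> op (gnorm iv (gdiv op iv a c)) (gnorm iv (gdiv op iv c b))"
  using gd_comp[of a b c] gn_tri[of "gdiv op iv a c" "gdiv op iv c b"] gdG by simp

end

theorem proposition7:
  fixes G :: "real set" and op :: "real \<Rightarrow> real \<Rightarrow> real" and e :: real and iv :: "real \<Rightarrow> real"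
  assumes "real_alo_group G op e iv"
    and "continuous_op G op"
    and "open G" and "is_interval G" and "G \<noteq> {}"
  shows "\<forall>A\<in>intervals G. \<forall>B\<in>intervals G. \<forall>C\<in>intervals G.
           dist_I op iv A B \<ge> e \<and>
           (dist_I op iv A B = e \<longleftrightarrow> A = B) \<and>
           dist_I op iv A B = dist_I op iv B A \<and>
           dist_I op iv A B \<le> op (dist_I op iv A C) (dist_I op iv C B)"
proof (intro ballI conjI)
  interpret ralo G op e iv using assms(1) by unfold_locales
  fix A B C assume AB: "A \<in> intervals G" "B \<in> intervals G" "C \<in> intervals G"
  obtain a1 a2 where a: "A = (a1,a2)" "a1\<in>G" "a2\<in>G" using AB unfolding intervals_def by auto
  obtain b1 b2 where b: "B = (b1,b2)" "b1\<in>G" "b2\<in>G" using AB unfolding intervals_def by auto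
  obtain c1 c2 where c: "C = (c1,c2)" "c1\<in>G" "c2\<in>G" using AB unfolding intervals_def by auto
  show "e \<le> dist_I op iv A B" unfolding dist_I_def using a b gn_ge gdG by (simp add: le_max_iff_disj)
  show "dist_I op iv A B = dist_I op iv B A" unfolding dist_I_def using a b gn_sym by simp
  show "dist_I op iv A B = e \<longleftrightarrow> A = B"
  proof -
    have g1: "e \<le> gnorm iv (gdiv op iv a1 b1)" "e \<le> gnorm iv (gdiv op iv a2 b2)"
      using a b gn_ge gdG by auto
    have "dist_I op iv A B = e \<longleftrightarrow> gnorm iv (gdiv op iv a1 b1) = e \<and> gnorm iv (gdiv op iv a2 b2) = e"
      unfolding dist_I_def using a b g1 by (auto simp: max_def)
    also have "\<dots> \<longleftrightarrow> a1 = b1 \<and> a2 = b2" using a b gn_e gd_e gdG by simp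
    finally show ?thesis using a b by simp
  qed
  show "dist_I op iv A B \<le> op (dist_I op iv A C) (dist_I op iv C B)"
  proof -
    let ?p1 = "gnorm iv (gdiv op iv a1 c1)" and ?p2 = "gnorm iv (gdiv op iv a2 c2)"
    let ?q1 = "gnorm iv (gdiv op iv c1 b1)" and ?q2 = "gnorm iv (gdiv op iv c2 b2)"
    have G: "?p1\<in>G" "?p2\<in>G" "?q1\<in>G" "?q2\<in>G" using a b c gnG gdG by auto
    have "gnorm iv (gdiv op iv a1 b1) \<le> op ?p1 ?q1" using gn_tri2 a b c by blast
    also have "\<dots> \<le> op (max ?p1 ?p2) (max ?q1 ?q2)" using mo2 G by (simp add: max_def)
    finally have 1: "gnorm iv (gdiv op iv a1 b1) \<le> op (max ?p1 ?p2) (max ?q1 ?q2)" .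
    have "gnorm iv (gdiv op iv a2 b2) \<le> op ?p2 ?q2" using gn_tri2 a b c by blast
    also have "\<dots> \<le> op (max ?p1 ?p2) (max ?q1 ?q2)" using mo2 G by (simp add: max_def)
    finally have 2: "gnorm iv (gdiv op iv a2 b2) \<le> op (max ?p1 ?p2) (max ?q1 ?q2)" .
    show ?thesis unfolding dist_I_def using 1 2 a b c by simp
  qed
qed

end
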